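(* Suppose $k$ is a local field, $X$ a topological space, and $A$ a Banach $k$-algebra. Then every injective unital $k$-algebra homomorphism $\phi:C_{bd}(X,k)\to A$ whose image is closed in $A$ is continuous with respect to the supremum norm on $C_{bd}(X,k)$. In particular, if $V$ is a $k$-Banach space and $\rho:C_{bd}(X,k)\to\mathcal B_k(V)$ is an injective $k$-algebra homomorphism into the bounded operators with closed image, then $\rho$ is bounded.
   Context: A local field means a complete discretely valued field with finite residue field. $C_{bd}(X,k)$ is the $k$-algebra of bounded continuous functions $X\to k$ with the supremum norm. A Banach $k$-algebra is a unital $k$-algebra with a complete norm satisfying $\|f+g\|\le\max(\|f\|,\|g\|)$, $\|fg\|\le\|f\|\|g\|$, $\|af\|=|a|\|f\|$ for $a\in k$, and $\|1\|=1$. For a non-Archimedean $k$-Banach space $V$, $\mathcal B_k(V)$ is the Banach $k$-algebra of bounded $k$-linear operators on $V$ with operator norm. *)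

theory Defs
  imports Main "HOL-Analysis.Analysis"
begin

definition kcauchy :: "('b \<Rightarrow> real) \<Rightarrow> (nat \<Rightarrow> 'b::ab_group_add) \<Rightarrow> bool" where
  "kcauchy nm s \<longleftrightarrow> (\<forall>e>0. \<exists>N. \<forall>m\<ge>N. \<forall>n\<ge>N. nm (s m - s n) < e)"

definition kconverges :: "('b \<Rightarrow> real) \<Rightarrow> (nat \<Rightarrow> 'b::ab_group_add) \<Rightarrow> 'b \<Rightarrow> bool" where
  "kconverges nm s l \<longleftrightarrow> (\<lambda>n. nm (s n - l)) \<longlonglongrightarrow> 0"

text \<open>A local field: a field with a non-Archimedean absolute value which is
  discrete and nontrivial, complete, and with finite residue field.\<close>
definition local_field :: "('k::field \<Rightarrow> real) \<Rightarrow> bool" where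
  "local_field v \<longleftrightarrow>
     (\<forall>x. 0 \<le> v x) \<and> (\<forall>x. v x = 0 \<longleftrightarrow> x = 0) \<and>
     (\<forall>x y. v (x * y) = v x * v y) \<and>
     (\<forall>x y. v (x + y) \<le> max (v x) (v y)) \<and>
     (\<exists>\<pi>. 0 < v \<pi> \<and> v \<pi> < 1 \<and> (\<forall>x. x \<noteq> 0 \<longrightarrow> (\<exists>n::int. v x = v \<pi> powi n))) \<and>
     (\<forall>s. kcauchy v s \<longrightarrow> (\<exists>l. kconverges v s l)) \<and>
     finite ({x. v x \<le> 1} // {(x, y). v x \<le> 1 \<and> v y \<le> 1 \<and> v (x - y) < 1})"

definition banach_k_algebra ::
  "('k::field \<Rightarrow> real) \<Rightarrow> ('k \<Rightarrow> 'a::ring_1 \<Rightarrow> 'a) \<Rightarrow> ('a \<Rightarrow> real) \<Rightarrow> bool" where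
  "banach_k_algebra v sm nA \<longleftrightarrow>
     (\<forall>c x y. sm c (x + y) = sm c x + sm c y) \<and>
     (\<forall>c d x. sm (c + d) x = sm c x + sm d x) \<and>
     (\<forall>c d x. sm (c * d) x = sm c (sm d x)) \<and>
     (\<forall>x. sm 1 x = x) \<and>
     (\<forall>c x y. sm c (x * y) = sm c x * y \<and> sm c (x * y) = x * sm c y) \<and>
     (\<forall>x. 0 \<le> nA x) \<and> (\<forall>x. nA x = 0 \<longleftrightarrow> x = 0) \<and>
     (\<forall>x y. nA (x + y) \<le> max (nA x) (nA y)) \<and>
     (\<forall>x y. nA (x * y) \<le> nA x * nA y) \<and>
     (\<forall>c x. nA (sm c x) = v c * nA x) \<and>
     nA 1 = 1 \<and>
     (\<forall>s. kcauchy nA s \<longrightarrow> (\<exists>l. kconverges nA s l))"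

definition k_banach_space ::
  "('k::field \<Rightarrow> real) \<Rightarrow> ('k \<Rightarrow> 'v::ab_group_add \<Rightarrow> 'v) \<Rightarrow> ('v \<Rightarrow> real) \<Rightarrow> bool" where
  "k_banach_space v sm nV \<longleftrightarrow>
     (\<forall>c x y. sm c (x + y) = sm c x + sm c y) \<and>
     (\<forall>c d x. sm (c + d) x = sm c x + sm d x) \<and>
     (\<forall>c d x. sm (c * d) x = sm c (sm d x)) \<and>
     (\<forall>x. sm 1 x = x) \<and>
     (\<forall>x. 0 \<le> nV x) \<and> (\<forall>x. nV x = 0 \<longleftrightarrow> x = 0) \<and>
     (\<forall>x y. nV (x + y) \<le> max (nV x) (nV y)) \<and>
     (\<forall>c x. nV (sm c x) = v c * nV x) \<and>
     (\<forall>s. kcauchy nV s \<longrightarrow> (\<exists>l. kconverges nV s l))"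

definition nclosed :: "('b \<Rightarrow> real) \<Rightarrow> 'b::ab_group_add set \<Rightarrow> bool" where
  "nclosed nm S \<longleftrightarrow> (\<forall>s l. (\<forall>i. s i \<in> S) \<longrightarrow> kconverges nm s l \<longrightarrow> l \<in> S)"

definition kcont :: "('k::field \<Rightarrow> real) \<Rightarrow> ('x::topological_space \<Rightarrow> 'k) \<Rightarrow> bool" where
  "kcont v f \<longleftrightarrow> (\<forall>x e. 0 < e \<longrightarrow> (\<exists>U. open U \<and> x \<in> U \<and> (\<forall>y\<in>U. v (f y - f x) < e)))"

definition Cbd :: "('k::field \<Rightarrow> real) \<Rightarrow> ('x::topological_space \<Rightarrow> 'k) set" where
  "Cbd v = {f. kcont v f \<and> (\<exists>B. \<forall>x. v (f x) \<le> B)}"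

definition supnorm :: "('k::field \<Rightarrow> real) \<Rightarrow> ('x \<Rightarrow> 'k) \<Rightarrow> real" where
  "supnorm v f = (SUP x. v (f x))"

definition unital_k_alg_hom ::
  "('k::field \<Rightarrow> real) \<Rightarrow> ('k \<Rightarrow> 'a::ring_1 \<Rightarrow> 'a) \<Rightarrow> (('x::topological_space \<Rightarrow> 'k) \<Rightarrow> 'a) \<Rightarrow> bool" where
  "unital_k_alg_hom v sm \<phi> \<longleftrightarrow>
     (\<forall>f\<in>Cbd v. \<forall>g\<in>Cbd v. \<phi> (\<lambda>x. f x + g x) = \<phi> f + \<phi> g \<and> \<phi> (\<lambda>x. f x * g x) = \<phi> f * \<phi> g) \<and>
     (\<forall>f\<in>Cbd v. \<forall>c. \<phi> (\<lambda>x. c * f x) = sm c (\<phi> f)) \<and>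
     \<phi> (\<lambda>x. 1) = 1"

definition sup_continuous_on_Cbd ::
  "('k::field \<Rightarrow> real) \<Rightarrow> ('b::ab_group_add \<Rightarrow> real) \<Rightarrow> (('x::topological_space \<Rightarrow> 'k) \<Rightarrow> 'b) \<Rightarrow> bool" where
  "sup_continuous_on_Cbd v nm \<phi> \<longleftrightarrow>
     (\<forall>f\<in>Cbd v. \<forall>e>0. \<exists>d>0. \<forall>g\<in>Cbd v.
        supnorm v (\<lambda>x. g x - f x) < d \<longrightarrow> nm (\<phi> g - \<phi> f) < e)"

definition Bops :: "('k \<Rightarrow> 'v::ab_group_add \<Rightarrow> 'v) \<Rightarrow> ('v \<Rightarrow> real) \<Rightarrow> ('v \<Rightarrow> 'v) set" where
  "Bops sm nV = {T. (\<forall>x y. T (x + y) = T x + T y) \<and> (\<forall>c x. T (sm c x) = sm c (T x)) \<and>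
                    (\<exists>C. \<forall>x. nV (T x) \<le> C * nV x)}"

definition opnorm :: "('v \<Rightarrow> real) \<Rightarrow> ('v \<Rightarrow> 'v) \<Rightarrow> real" where
  "opnorm nV T = Inf {C. 0 \<le> C \<and> (\<forall>x. nV (T x) \<le> C * nV x)}"

definition unital_k_alg_hom_ops ::
  "('k::field \<Rightarrow> real) \<Rightarrow> ('k \<Rightarrow> 'v::ab_group_add \<Rightarrow> 'v) \<Rightarrow> ('v \<Rightarrow> real)
     \<Rightarrow> (('x::topological_space \<Rightarrow> 'k) \<Rightarrow> ('v \<Rightarrow> 'v)) \<Rightarrow> bool" where
  "unital_k_alg_hom_ops v sm nV \<rho> \<longleftrightarrow>
     (\<forall>f\<in>Cbd v. \<rho> f \<in> Bops sm nV) \<and>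
     (\<forall>f\<in>Cbd v. \<forall>g\<in>Cbd v. \<rho> (\<lambda>x. f x + g x) = (\<lambda>w. \<rho> f w + \<rho> g w) \<and>
                         \<rho> (\<lambda>x. f x * g x) = \<rho> f \<circ> \<rho> g) \<and>
     (\<forall>f\<in>Cbd v. \<forall>c. \<rho> (\<lambda>x. c * f x) = (\<lambda>w. sm c (\<rho> f w))) \<and>
     \<rho> (\<lambda>x. 1) = id"

definition opclosed :: "('v::ab_group_add \<Rightarrow> real) \<Rightarrow> ('v \<Rightarrow> 'v) set \<Rightarrow> bool" where
  "opclosed nV S \<longleftrightarrow> (\<forall>s L. (\<forall>i. s i \<in> S) \<longrightarrow> (\<lambda>i. opnorm nV (\<lambda>w. s i w - L w)) \<longlonglongrightarrow> 0 \<longrightarrow> L \<in> S)"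

end

theory Submission
  imports Defs
begin

locale lf =
  fixes v :: "'k::field \<Rightarrow> real"
  assumes lfv: "local_field v"
begin

lemmas LF = lfv[unfolded local_field_def]
lemma v_nonneg: "0 \<le> v x" using conjunct1[OF LF] by auto
lemma v_zero_iff: "v x = 0 \<longleftrightarrow> x = 0" using conjunct1[OF conjunct2[OF LF]] by auto
lemma v_mult: "v (x * y) = v x * v y" using conjunct1[OF conjunct2[OF conjunct2[OF LF]]] by auto
lemma v_ultra: "v (x + y) \<le> max (v x) (v y)" using conjunct1[OF conjunct2[OF conjunct2[OF conjunct2[OF LF]]]] by auto
lemma v_pi: "\<exists>p. 0 < v p \<and> v p < 1" using conjunct1[OF conjunct2[OF conjunct2[OF conjunct2[OF conjunct2[OF LF]]]]] by auto
lemma v_complete: "kcauchy v s \<Longrightarrow> \<exists>l. kconverges v s l" using conjunct1[OF conjunct2[OF conjunct2[OF conjunct2[OF conjunct2[OF conjunct2[OF LF]]]]]] by auto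

lemma v_0[simp]: "v 0 = 0" using v_zero_iff by simp
lemma v_1[simp]: "v 1 = 1"
proof -
  have "v 1 = v 1 * v 1" using v_mult[of 1 1] by simp
  then have "v 1 * (v 1 - 1) = 0" by (simp add: algebra_simps)
  moreover have "v 1 \<noteq> 0" using v_zero_iff by simp
  ultimately show ?thesis by simp
qed
lemma v_minus1[simp]: "v (-1) = 1"
proof -
  have "v (-1) * v (-1) = 1" using v_mult[of "-1" "-1"] by simp
  then have "(v (-1) - 1) * (v (-1) + 1) = 0" by (simp add: algebra_simps)
  with v_nonneg[of "-1"] show ?thesis by simp
qed
lemma v_uminus[simp]: "v (- x) = v x"
  using v_mult[of "-1" x] by simp
lemma v_minus_commute: "v (x - y) = v (y - x)"
proof -
  have "v (x - y) = v (- (y - x))" by simp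
  then show ?thesis by (simp only: v_uminus)
qed
lemma v_inverse: "v (inverse x) = inverse (v x)"
proof (cases "x = 0")
  case False
  then have "v x * v (inverse x) = 1" using v_mult[of x "inverse x"] by simp
  then show ?thesis by (rule inverse_unique[symmetric])
qed simp
lemma v_power: "v (x ^ n) = v x ^ n"
  by (induction n) (auto simp: v_mult)
lemma v_triangle3: "v (a - c) \<le> max (v (a - b)) (v (b - c))"
  using v_ultra[of "a - b" "b - c"] by simp

lemma kconv_iff: "kconverges v s l \<longleftrightarrow> (\<forall>e>0. \<exists>M. \<forall>n\<ge>M. v (s n - l) < e)"
  unfolding kconverges_def LIMSEQ_iff by (simp add: abs_of_nonneg v_nonneg)

lemma Cbd_iff: "f \<in> Cbd v \<longleftrightarrow> kcont v f \<and> (\<exists>B. \<forall>x. v (f x) \<le> B)"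
  by (simp add: Cbd_def)

lemma Cbd_bound:
  assumes "f \<in> Cbd v" obtains B where "0 \<le> B" "\<And>x. v (f x) \<le> B"
proof -
  obtain B where "\<forall>x. v (f x) \<le> B" using assms Cbd_iff by blast
  then have "\<forall>x. v (f x) \<le> max B 0" by (auto simp: le_max_iff_disj)
  then show ?thesis using that[of "max B 0"] by simp
qed

lemma Cbd_const: "(\<lambda>x. c) \<in> Cbd v"
  unfolding Cbd_iff kcont_def
proof (intro conjI allI impI)
  fix x and e :: real assume "0 < e"
  then show "\<exists>U. open U \<and> x \<in> U \<and> (\<forall>y\<in>U. v (c - c) < e)" by (intro exI[of _ UNIV]) simp
qed auto

lemma Cbd_add:
  assumes f: "f \<in> Cbd v" and g: "g \<in> Cbd v"
  shows "(\<lambda>x. f x + g x) \<in> Cbd v"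
  unfolding Cbd_iff
proof
  obtain Bf where "\<And>x. v (f x) \<le> Bf" using Cbd_bound f by blast
  moreover obtain Bg where "\<And>x. v (g x) \<le> Bg" using Cbd_bound g by blast
  ultimately have "\<forall>x. v (f x + g x) \<le> max Bf Bg"
    by (meson max.mono order_trans v_ultra)
  then show "\<exists>B. \<forall>x. v (f x + g x) \<le> B" by blast
  show "kcont v (\<lambda>x. f x + g x)"
    unfolding kcont_def
  proof (intro allI impI)
    fix x and e :: real assume e: "0 < e"
    obtain U1 where U1: "open U1" "x \<in> U1" "\<forall>y\<in>U1. v (f y - f x) < e"
      using f e unfolding Cbd_iff kcont_def by blast
    obtain U2 where U2: "open U2" "x \<in> U2" "\<forall>y\<in>U2. v (g y - g x) < e"
      using g e unfolding Cbd_iff kcont_def by blast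
    have "\<forall>y\<in>U1 \<inter> U2. v (f y + g y - (f x + g x)) < e"
    proof
      fix y assume y: "y \<in> U1 \<inter> U2"
      have "f y + g y - (f x + g x) = (f y - f x) + (g y - g x)" by (simp add: algebra_simps)
      then have "v (f y + g y - (f x + g x)) \<le> max (v (f y - f x)) (v (g y - g x))"
        using v_ultra by metis
      moreover have "max (v (f y - f x)) (v (g y - g x)) < e" using y U1 U2 by simp
      ultimately show "v (f y + g y - (f x + g x)) < e" by linarith
    qed
    then show "\<exists>U. open U \<and> x \<in> U \<and> (\<forall>y\<in>U. v (f y + g y - (f x + g x)) < e)"
      using U1 U2 by (intro exI[of _ "U1 \<inter> U2"]) auto
  qed
qed

lemma Cbd_mult:
  assumes f: "f \<in> Cbd v" and g: "g \<in> Cbd v"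
  shows "(\<lambda>x. f x * g x) \<in> Cbd v"
  unfolding Cbd_iff
proof
  obtain Bf where Bf: "0 \<le> Bf" "\<And>x. v (f x) \<le> Bf" using Cbd_bound f by blast
  obtain Bg where Bg: "0 \<le> Bg" "\<And>x. v (g x) \<le> Bg" using Cbd_bound g by blast
  have "\<forall>x. v (f x * g x) \<le> Bf * Bg"
    using Bf Bg by (simp add: v_mult mult_mono v_nonneg)
  then show "\<exists>B. \<forall>x. v (f x * g x) \<le> B" by blast
  show "kcont v (\<lambda>x. f x * g x)"
    unfolding kcont_def
  proof (intro allI impI)
    fix x and e :: real assume e: "0 < e"
    define e1 where "e1 = e / (Bg + 1)"
    define e2 where "e2 = e / (Bf + 1)"
    have e1: "0 < e1" and e2: "0 < e2" using e Bf Bg by (auto simp: e1_def e2_def)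
    obtain U1 where U1: "open U1" "x \<in> U1" "\<forall>y\<in>U1. v (f y - f x) < e1"
      using f e1 unfolding Cbd_iff kcont_def by blast
    obtain U2 where U2: "open U2" "x \<in> U2" "\<forall>y\<in>U2. v (g y - g x) < e2"
      using g e2 unfolding Cbd_iff kcont_def by blast
    have "\<forall>y\<in>U1 \<inter> U2. v (f y * g y - f x * g x) < e"
    proof
      fix y assume y: "y \<in> U1 \<inter> U2"
      have eq: "f y * g y - f x * g x = f y * (g y - g x) + (f y - f x) * g x" by (simp add: algebra_simps)
      have a: "v (f y * (g y - g x)) < e"
      proof -
        have "v (f y * (g y - g x)) = v (f y) * v (g y - g x)" by (simp add: v_mult)
        also have "\<dots> \<le> Bf * e2" using Bf Bf(2)[of y] U2 y by (intro mult_mono) (auto simp: v_nonneg less_imp_le)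
        also have "\<dots> < e" using Bf e unfolding e2_def by (simp add: field_simps)
        finally show ?thesis .
      qed
      have b: "v ((f y - f x) * g x) < e"
      proof -
        have "v ((f y - f x) * g x) = v (f y - f x) * v (g x)" by (simp add: v_mult)
        also have "\<dots> \<le> e1 * Bg" using Bg Bg(2)[of x] U1 y e1 by (intro mult_mono) (auto simp: v_nonneg less_imp_le)
        also have "\<dots> < e" using Bg e unfolding e1_def by (simp add: field_simps)
        finally show ?thesis .
      qed
      have "v (f y * g y - f x * g x) \<le> max (v (f y * (g y - g x))) (v ((f y - f x) * g x))"
        unfolding eq by (rule v_ultra)
      then show "v (f y * g y - f x * g x) < e" using a b by simp
    qed
    then show "\<exists>U. open U \<and> x \<in> U \<and> (\<forall>y\<in>U. v (f y * g y - f x * g x) < e)"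
      using U1 U2 by (intro exI[of _ "U1 \<inter> U2"]) auto
  qed
qed

lemma Cbd_smult: "f \<in> Cbd v \<Longrightarrow> (\<lambda>x. c * f x) \<in> Cbd v"
  using Cbd_mult[OF Cbd_const] by blast

lemma Cbd_uminus: "f \<in> Cbd v \<Longrightarrow> (\<lambda>x. - f x) \<in> Cbd v"
  using Cbd_smult[of f "-1"] by simp

lemma Cbd_diff: "f \<in> Cbd v \<Longrightarrow> g \<in> Cbd v \<Longrightarrow> (\<lambda>x. f x - g x) \<in> Cbd v"
  using Cbd_add[OF _ Cbd_uminus, of f g] by simp

lemma Cbd_zero: "(\<lambda>x. 0) \<in> Cbd v" by (rule Cbd_const)
lemma Cbd_one: "(\<lambda>x. 1) \<in> Cbd v" by (rule Cbd_const)

lemma Cbd_power: "f \<in> Cbd v \<Longrightarrow> (\<lambda>x. f x ^ n) \<in> Cbd v"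
  by (induction n) (auto intro: Cbd_const Cbd_mult)

lemma Cbd_sum: "f \<in> Cbd v \<Longrightarrow> (\<lambda>x. \<Sum>j<n. f x ^ j) \<in> Cbd v"
  by (induction n) (auto intro: Cbd_const Cbd_add Cbd_power)

lemma sup_upper: "f \<in> Cbd v \<Longrightarrow> v (f x) \<le> supnorm v f"
  unfolding supnorm_def
proof (rule cSUP_upper)
  assume "f \<in> Cbd v"
  then obtain B where "\<And>x. v (f x) \<le> B" using Cbd_bound by blast
  then show "bdd_above (range (\<lambda>x. v (f x)))" by (intro bdd_aboveI2) auto
qed simp

lemma sup_least: "(\<And>x. v (f x) \<le> B) \<Longrightarrow> supnorm v f \<le> B"
  unfolding supnorm_def by (rule cSUP_least) auto

lemma sup_nonneg: "f \<in> Cbd v \<Longrightarrow> 0 \<le> supnorm v f"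
  using sup_upper v_nonneg order_trans by blast

lemma sup_zero: "f \<in> Cbd v \<Longrightarrow> supnorm v f \<le> 0 \<Longrightarrow> f = (\<lambda>x. 0)"
proof (rule ext)
  fix x assume "f \<in> Cbd v" "supnorm v f \<le> 0"
  then have "v (f x) \<le> 0" using sup_upper order_trans by blast
  then show "f x = 0" using v_nonneg v_zero_iff by (meson antisym)
qed

lemma sup_const0: "supnorm v (\<lambda>x. 0) = 0"
  by (simp add: supnorm_def)

lemma sup_add: "f \<in> Cbd v \<Longrightarrow> g \<in> Cbd v \<Longrightarrow> supnorm v (\<lambda>x. f x + g x) \<le> max (supnorm v f) (supnorm v g)"
  by (rule sup_least) (meson max.mono order_trans sup_upper v_ultra)

lemma sup_smult_le: "f \<in> Cbd v \<Longrightarrow> supnorm v (\<lambda>x. c * f x) \<le> v c * supnorm v f"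
  by (rule sup_least) (simp add: v_mult mult_left_mono sup_upper v_nonneg)

lemma sup_smult: assumes "f \<in> Cbd v" shows "supnorm v (\<lambda>x. c * f x) = v c * supnorm v f"
proof (cases "c = 0")
  case True then show ?thesis by (simp add: sup_const0)
next
  case False
  have "(\<lambda>x. inverse c * (c * f x)) = f" by (rule ext) (simp add: False mult.assoc[symmetric])
  then have "supnorm v f = supnorm v (\<lambda>x. inverse c * (c * f x))" by simp
  also have "\<dots> \<le> v (inverse c) * supnorm v (\<lambda>x. c * f x)"
    by (rule sup_smult_le) (rule Cbd_smult[OF assms])
  finally have h: "supnorm v f \<le> inverse (v c) * supnorm v (\<lambda>x. c * f x)" by (simp only: v_inverse)
  have vc: "0 < v c" using False v_nonneg[of c] v_zero_iff[of c] by linarith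
  have "v c * supnorm v f \<le> v c * (inverse (v c) * supnorm v (\<lambda>x. c * f x))"
    using h vc by (intro mult_left_mono) auto
  moreover have "v c * (inverse (v c) * supnorm v (\<lambda>x. c * f x)) = supnorm v (\<lambda>x. c * f x)"
    using vc by (simp add: field_simps)
  ultimately have "v c * supnorm v f \<le> supnorm v (\<lambda>x. c * f x)" by simp
  then show ?thesis using sup_smult_le[OF assms, of c] by simp
qed

lemma sup_commute: "supnorm v (\<lambda>x. f x - g x) = supnorm v (\<lambda>x. g x - f x)"
proof -
  have eq: "(\<lambda>x. v (f x - g x)) = (\<lambda>x. v (g x - f x))" by (rule ext) (rule v_minus_commute)
  show ?thesis unfolding supnorm_def by (subst eq) (rule refl)
qed

lemma sup_tri3:
  assumes "a \<in> Cbd v" "b \<in> Cbd v" "c \<in> Cbd v"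
  shows "supnorm v (\<lambda>x. a x - c x) \<le> max (supnorm v (\<lambda>x. a x - b x)) (supnorm v (\<lambda>x. b x - c x))"
proof (rule sup_least)
  fix x
  have "v (a x - c x) \<le> max (v (a x - b x)) (v (b x - c x))" by (rule v_triangle3)
  also have "\<dots> \<le> max (supnorm v (\<lambda>x. a x - b x)) (supnorm v (\<lambda>x. b x - c x))"
    using assms by (intro max.mono sup_upper[of "\<lambda>x. _ x - _ x", simplified] Cbd_diff) auto
  finally show "v (a x - c x) \<le> \<dots>" .
qed

lemma sup_diff_upper: "f \<in> Cbd v \<Longrightarrow> g \<in> Cbd v \<Longrightarrow> v (f x - g x) \<le> supnorm v (\<lambda>x. f x - g x)"
  using sup_upper[OF Cbd_diff] by blast

lemma sup_complete:
  fixes s :: "nat \<Rightarrow> 'x::topological_space \<Rightarrow> 'k"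
  assumes s: "\<And>i. s i \<in> Cbd v"
    and C: "\<And>e. e > 0 \<Longrightarrow> \<exists>M. \<forall>m\<ge>M. \<forall>n\<ge>M. supnorm v (\<lambda>x. s m x - s n x) < e"
  shows "\<exists>l\<in>Cbd v. \<forall>e>0. \<exists>M. \<forall>n\<ge>M. supnorm v (\<lambda>x. s n x - l x) < e"
proof -
  have "\<forall>x. \<exists>l. kconverges v (\<lambda>n. s n x) l"
  proof
    fix x
    have "kcauchy v (\<lambda>n. s n x)"
      unfolding kcauchy_def
    proof (intro allI impI)
      fix e :: real assume "0 < e"
      then obtain M where M: "\<forall>m\<ge>M. \<forall>n\<ge>M. supnorm v (\<lambda>x. s m x - s n x) < e" using C by blast
      show "\<exists>N. \<forall>m\<ge>N. \<forall>n\<ge>N. v (s m x - s n x) < e"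
        using M sup_diff_upper[OF s s] by (meson le_less_trans)
    qed
    then show "\<exists>l. kconverges v (\<lambda>n. s n x) l" by (rule v_complete)
  qed
  then obtain l where l: "\<And>x. kconverges v (\<lambda>n. s n x) (l x)" by metis
  have UC: "\<exists>M. \<forall>n\<ge>M. \<forall>x. v (s n x - l x) < e" if e: "e > 0" for e
  proof -
    obtain M where M: "\<forall>m\<ge>M. \<forall>n\<ge>M. supnorm v (\<lambda>x. s m x - s n x) < e" using C e by blast
    have "\<forall>n\<ge>M. \<forall>x. v (s n x - l x) < e"
    proof (intro allI impI)
      fix n x assume n: "M \<le> n"
      obtain M' where M': "\<forall>m\<ge>M'. v (s m x - l x) < e" using l[of x] e unfolding kconv_iff by blast
      define m where "m = max M M'"
      have "v (s n x - s m x) < e" using M n sup_diff_upper[OF s[of n] s[of m], of x] unfolding m_def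
        by (meson le_less_trans max.cobounded1)
      moreover have "v (s m x - l x) < e" using M' unfolding m_def by simp
      ultimately show "v (s n x - l x) < e" using v_triangle3[of "s n x" "l x" "s m x"] by linarith
    qed
    then show ?thesis by blast
  qed
  have lC: "l \<in> Cbd v"
    unfolding Cbd_iff
  proof
    show "kcont v l"
      unfolding kcont_def
    proof (intro allI impI)
      fix x and e :: real assume e: "0 < e"
      obtain M where M: "\<forall>n\<ge>M. \<forall>x. v (s n x - l x) < e" using UC e by blast
      obtain U where U: "open U" "x \<in> U" "\<forall>y\<in>U. v (s M y - s M x) < e"
        using s[of M] e unfolding Cbd_iff kcont_def by blast
      have "\<forall>y\<in>U. v (l y - l x) < e"
      proof
        fix y assume y: "y \<in> U"
        have a: "v (l y - s M y) < e" using M v_minus_commute by (metis order_refl)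
        have b: "v (s M y - s M x) < e" using U y by blast
        have c: "v (s M x - l x) < e" using M by blast
        have "v (l y - l x) \<le> max (v (l y - s M y)) (v (s M y - l x))" by (rule v_triangle3)
        moreover have "v (s M y - l x) \<le> max (v (s M y - s M x)) (v (s M x - l x))" by (rule v_triangle3)
        ultimately show "v (l y - l x) < e" using a b c by linarith
      qed
      then show "\<exists>U. open U \<and> x \<in> U \<and> (\<forall>y\<in>U. v (l y - l x) < e)" using U by blast
    qed
    obtain M where M: "\<forall>n\<ge>M. \<forall>x. v (s n x - l x) < 1" using UC[of 1] by auto
    obtain B where B: "\<And>x. v (s M x) \<le> B" using Cbd_bound s by blast
    have "\<forall>x. v (l x) \<le> max 1 B"
    proof
      fix x
      have "v (l x) = v ((l x - s M x) + s M x)" by simp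
      also have "\<dots> \<le> max (v (l x - s M x)) (v (s M x))" by (rule v_ultra)
      also have "\<dots> \<le> max 1 B" using M B[of x] v_minus_commute[of "l x" "s M x"]
        by (intro max.mono) (auto simp: less_imp_le)
      finally show "v (l x) \<le> max 1 B" .
    qed
    then show "\<exists>B. \<forall>x. v (l x) \<le> B" by blast
  qed
  have "\<forall>e>0. \<exists>M. \<forall>n\<ge>M. supnorm v (\<lambda>x. s n x - l x) < e"
  proof (intro allI impI)
    fix e :: real assume e: "0 < e"
    then obtain M where M: "\<forall>n\<ge>M. \<forall>x. v (s n x - l x) < e/2" using UC[of "e/2"] by auto
    have "\<forall>n\<ge>M. supnorm v (\<lambda>x. s n x - l x) \<le> e/2"
    proof (intro allI impI sup_least)
      fix n x assume "M \<le> n"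
      then show "v (s n x - l x) \<le> e/2" using M less_imp_le by blast
    qed
    show "\<exists>M. \<forall>n\<ge>M. supnorm v (\<lambda>x. s n x - l x) < e"
    proof (intro exI[of _ M] allI impI)
      fix n assume "M \<le> n"
      then have "supnorm v (\<lambda>x. s n x - l x) \<le> e/2" using \<open>\<forall>n\<ge>M. supnorm v (\<lambda>x. s n x - l x) \<le> e/2\<close> by blast
      then show "supnorm v (\<lambda>x. s n x - l x) < e" using e by linarith
    qed
  qed
  with lC show ?thesis by blast
qed

end

lemma pow_small:
  fixes a y :: real assumes "0 \<le> a" "a < 1" "0 < y"
  shows "\<exists>M. \<forall>n\<ge>M. a ^ n < y"
proof -
  obtain M where M: "a ^ M < y" using real_arch_pow_inv assms by blast
  have "\<forall>n\<ge>M. a ^ n < y"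
  proof (intro allI impI)
    fix n assume "M \<le> n"
    then have "a ^ n \<le> a ^ M" using assms by (intro power_decreasing) auto
    then show "a ^ n < y" using M by linarith
  qed
  then show ?thesis by blast
qed

context lf begin
lemma scale_exists:
  assumes p: "0 < v p" "v p < 1" and t: "0 < t" and r: "0 < r"
  shows "\<exists>c. c \<noteq> 0 \<and> r * v p \<le> v c * t \<and> v c * t < r"
proof -
  define q where "q = v p"
  have q: "0 < q" "q < 1" using p q_def by auto
  have p0: "p \<noteq> 0" using p by auto
  show ?thesis
  proof (cases "t < r")
    case True
    have "1 < 1 / q" using q by simp
    then obtain m where "r / t < (1 / q) ^ m" using real_arch_pow by blast
    then have ex: "r \<le> t * (1 / q) ^ m" using t by (simp add: field_simps)
    define m0 where "m0 = (LEAST m. r \<le> t * (1 / q) ^ m)"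
    have m0: "r \<le> t * (1 / q) ^ m0" unfolding m0_def by (rule LeastI[of "\<lambda>m. r \<le> t * (1 / q) ^ m" m, OF ex])
    have "m0 \<noteq> 0"
    proof
      assume "m0 = 0" then show False using m0 True by simp
    qed
    then obtain k where k: "m0 = Suc k" using not0_implies_Suc by blast
    have "\<not> r \<le> t * (1 / q) ^ k" using not_less_Least[of k "\<lambda>m. r \<le> t * (1 / q) ^ m"] k m0_def by simp
    then have A: "t * (1 / q) ^ k < r" by simp
    have B: "r * q \<le> t * (1 / q) ^ k"
    proof -
      have "r * q \<le> (t * (1 / q) ^ Suc k) * q" using m0 k q by (intro mult_right_mono) auto
      also have "\<dots> = t * (1 / q) ^ k" using q by (simp add: field_simps)
      finally show ?thesis .
    qed
    define c where "c = inverse p ^ k"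
    have vc: "v c = (1 / q) ^ k" unfolding c_def q_def by (simp add: v_power v_inverse divide_inverse)
    show ?thesis using A B vc p0 unfolding q_def by (intro exI[of _ c]) (auto simp: c_def mult.commute)
  next
    case False
    obtain m where "q ^ m < r / t" using real_arch_pow_inv[of "r / t" q] q r t by auto
    then have ex: "t * q ^ m < r" using t by (simp add: field_simps)
    define m0 where "m0 = (LEAST m. t * q ^ m < r)"
    have m0: "t * q ^ m0 < r" unfolding m0_def by (rule LeastI[of "\<lambda>m. t * q ^ m < r" m, OF ex])
    have "m0 \<noteq> 0"
    proof
      assume "m0 = 0" then show False using m0 False by simp
    qed
    then obtain k where k: "m0 = Suc k" using not0_implies_Suc by blast
    have "\<not> t * q ^ k < r" using not_less_Least[of k "\<lambda>m. t * q ^ m < r"] k m0_def by simp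
    then have B: "r * q \<le> t * q ^ m0" using q k by (simp add: mult_right_mono algebra_simps)
    define c where "c = p ^ m0"
    have vc: "v c = q ^ m0" unfolding c_def q_def by (simp add: v_power)
    show ?thesis using m0 B vc p0 unfolding q_def by (intro exI[of _ c]) (auto simp: c_def mult.commute)
  qed
qed

end

locale normN = lf v for v :: "'k::field \<Rightarrow> real" +
  fixes N :: "('x::topological_space \<Rightarrow> 'k) \<Rightarrow> real"
  assumes N_nonneg: "f \<in> Cbd v \<Longrightarrow> 0 \<le> N f"
    and N_zero: "f \<in> Cbd v \<Longrightarrow> N f = 0 \<Longrightarrow> f = (\<lambda>x. 0)"
    and N_add: "f \<in> Cbd v \<Longrightarrow> g \<in> Cbd v \<Longrightarrow> N (\<lambda>x. f x + g x) \<le> max (N f) (N g)"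
    and N_smult: "f \<in> Cbd v \<Longrightarrow> N (\<lambda>x. c * f x) = v c * N f"
    and N_mult: "f \<in> Cbd v \<Longrightarrow> g \<in> Cbd v \<Longrightarrow> N (\<lambda>x. f x * g x) \<le> N f * N g"
    and N_complete: "(\<And>i::nat. s i \<in> Cbd v) \<Longrightarrow>
       (\<And>e. e > 0 \<Longrightarrow> \<exists>M. \<forall>m\<ge>M. \<forall>n\<ge>M. N (\<lambda>x. s m x - s n x) < e) \<Longrightarrow>
       \<exists>l\<in>Cbd v. \<forall>e>0. \<exists>M. \<forall>n\<ge>M. N (\<lambda>x. s n x - l x) < e"
begin

lemma N_zero0: "N (\<lambda>x. 0) = 0"
  using N_smult[OF Cbd_zero, of 0] by simp

lemma N_uminus: "f \<in> Cbd v \<Longrightarrow> N (\<lambda>x. - f x) = N f"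
  using N_smult[of f "-1"] by simp

lemma N_commute: assumes "f \<in> Cbd v" "g \<in> Cbd v"
  shows "N (\<lambda>x. f x - g x) = N (\<lambda>x. g x - f x)"
proof -
  have "(\<lambda>x. g x - f x) = (\<lambda>x. - (f x - g x))" by simp
  then show ?thesis using N_uminus[OF Cbd_diff[OF assms]] by simp
qed

lemma N_tri3:
  assumes "a \<in> Cbd v" "b \<in> Cbd v" "c \<in> Cbd v"
  shows "N (\<lambda>x. a x - c x) \<le> max (N (\<lambda>x. a x - b x)) (N (\<lambda>x. b x - c x))"
proof -
  have "(\<lambda>x. a x - c x) = (\<lambda>x. (a x - b x) + (b x - c x))" by simp
  then show ?thesis using N_add[OF Cbd_diff[OF assms(1,2)] Cbd_diff[OF assms(2,3)]] by simp
qed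

lemma N_geom:
  fixes s :: "nat \<Rightarrow> 'x \<Rightarrow> 'k"
  assumes s: "\<And>i. s i \<in> Cbd v" and B: "0 \<le> B" and a: "0 \<le> a" "a < 1"
    and d: "\<And>i. N (\<lambda>x. s (Suc i) x - s i x) \<le> B * a ^ i"
  shows "\<exists>l\<in>Cbd v. (\<forall>e>0. \<exists>M. \<forall>n\<ge>M. N (\<lambda>x. s n x - l x) < e) \<and>
            (\<forall>n. N (\<lambda>x. l x - s n x) \<le> B * a ^ n)"
proof -
  have D: "N (\<lambda>x. s (n + k) x - s n x) \<le> B * a ^ n" for n k
  proof (induction k)
    case 0 then show ?case using N_zero0 B a by simp
  next
    case (Suc k)
    have "N (\<lambda>x. s (n + Suc k) x - s n x) \<le> max (N (\<lambda>x. s (Suc (n + k)) x - s (n + k) x)) (N (\<lambda>x. s (n + k) x - s n x))"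
      using N_tri3[OF s s s] by simp
    moreover have "B * a ^ (n + k) \<le> B * a ^ n" using B a by (intro mult_left_mono power_decreasing) auto
    ultimately show ?case using d[of "n + k"] Suc by simp
  qed
  have D2: "N (\<lambda>x. s m x - s n x) \<le> B * a ^ M" if "M \<le> m" "M \<le> n" for m n M
  proof (cases "n \<le> m")
    case True
    then obtain k where "m = n + k" using le_Suc_ex by blast
    then have "N (\<lambda>x. s m x - s n x) \<le> B * a ^ n" using D by simp
    also have "\<dots> \<le> B * a ^ M" using B a that by (intro mult_left_mono power_decreasing) auto
    finally show ?thesis .
  next
    case False
    then obtain k where "n = m + k" using le_Suc_ex nat_le_linear by blast
    then have "N (\<lambda>x. s n x - s m x) \<le> B * a ^ m" using D by simp
    also have "\<dots> \<le> B * a ^ M" using B a that by (intro mult_left_mono power_decreasing) auto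
    finally show ?thesis using N_commute[OF s s] by simp
  qed
  have "\<exists>M. \<forall>m\<ge>M. \<forall>n\<ge>M. N (\<lambda>x. s m x - s n x) < e" if e: "e > 0" for e
  proof -
    obtain M where M: "\<forall>n\<ge>M. a ^ n < e / (B + 1)" using pow_small[OF a, of "e / (B + 1)"] e B by auto
    have "B * a ^ M < e"
    proof -
      have "B * a ^ M \<le> (B + 1) * a ^ M" using a by (simp add: mult_right_mono)
      also have "\<dots> < (B + 1) * (e / (B + 1))" using M B by (intro mult_strict_left_mono) auto
      also have "\<dots> = e" using B by simp
      finally show ?thesis .
    qed
    then show ?thesis using D2 by (meson le_less_trans)
  qed
  then obtain l where l: "l \<in> Cbd v" "\<forall>e>0. \<exists>M. \<forall>n\<ge>M. N (\<lambda>x. s n x - l x) < e"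
    using N_complete[of s, OF s] by blast
  have "N (\<lambda>x. l x - s n x) \<le> B * a ^ n" for n
  proof (rule ccontr)
    assume c: "\<not> ?thesis"
    define t where "t = N (\<lambda>x. l x - s n x)"
    have t: "B * a ^ n < t" using c t_def by simp
    have "0 \<le> B * a ^ n" using B a by simp
    then have "0 < t" using t by linarith
    then obtain M where M: "\<forall>m\<ge>M. N (\<lambda>x. s m x - l x) < t" using l(2) by blast
    define m where "m = max M n"
    have "t \<le> max (N (\<lambda>x. l x - s m x)) (N (\<lambda>x. s m x - s n x))"
      unfolding t_def using N_tri3[OF l(1) s s] by blast
    moreover have "N (\<lambda>x. l x - s m x) < t" using M N_commute[OF l(1) s] m_def by simp
    moreover have "N (\<lambda>x. s m x - s n x) < t" using D2[of n m n] t m_def by simp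
    ultimately show False by simp
  qed
  then show ?thesis using l by blast
qed


lemma N_pt:
  assumes f: "f \<in> Cbd v" shows "v (f x0) \<le> N f"
proof (rule ccontr)
  assume "\<not> ?thesis"
  then have lt: "N f < v (f x0)" by simp
  define c where "c = f x0"
  have Nf0: "0 \<le> N f" using N_nonneg f by blast
  have vc: "0 < v c" unfolding c_def using lt Nf0 by linarith
  then have c0: "c \<noteq> 0" by auto
  define u where "u = (\<lambda>x. inverse c * f x)"
  have uC: "u \<in> Cbd v" unfolding u_def by (rule Cbd_smult[OF f])
  define a where "a = N u"
  have a_eq: "a = inverse (v c) * N f" unfolding a_def u_def using N_smult[OF f] v_inverse by simp
  have a0: "0 \<le> a" unfolding a_def using N_nonneg uC by blast
  have a1: "a < 1"
  proof -
    have "a < inverse (v c) * v c" unfolding a_eq using lt vc c_def by (intro mult_strict_left_mono) auto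
    then show ?thesis using vc by simp
  qed
  define K where "K = N (\<lambda>x. 1)"
  have K0: "0 \<le> K" unfolding K_def using N_nonneg Cbd_one by blast
  have pC: "(\<lambda>x. u x ^ j) \<in> Cbd v" for j using Cbd_power[OF uC] .
  have pN: "N (\<lambda>x. u x ^ j) \<le> K * a ^ j" for j
  proof (induction j)
    case 0 then show ?case by (simp add: K_def)
  next
    case (Suc j)
    have "N (\<lambda>x. u x ^ Suc j) = N (\<lambda>x. u x * u x ^ j)" by simp
    also have "\<dots> \<le> N u * N (\<lambda>x. u x ^ j)" by (rule N_mult[OF uC pC])
    also have "\<dots> \<le> a * (K * a ^ j)" unfolding a_def using Suc a0 a_def by (intro mult_left_mono) auto
    finally show ?case by (simp add: algebra_simps)
  qed
  define g where "g = (\<lambda>n x. \<Sum>j<n. u x ^ j)"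
  have gC: "g n \<in> Cbd v" for n unfolding g_def using Cbd_sum[OF uC] .
  have gd: "N (\<lambda>x. g (Suc n) x - g n x) \<le> K * a ^ n" for n
  proof -
    have "(\<lambda>x. g (Suc n) x - g n x) = (\<lambda>x. u x ^ n)" by (simp add: g_def)
    then show ?thesis using pN by simp
  qed
  obtain G where GC: "G \<in> Cbd v" and G: "\<forall>e>0. \<exists>M. \<forall>n\<ge>M. N (\<lambda>x. g n x - G x) < e"
    using N_geom[OF gC K0 a0 a1 gd] by blast
  define h where "h = (\<lambda>x. (1 - u x) * G x - 1)"
  have omC: "(\<lambda>x. 1 - u x) \<in> Cbd v" using Cbd_diff[OF Cbd_one uC] .
  have hrep: "h = (\<lambda>x. (1 - u x) * (G x - g n x) + (- (u x ^ n)))" for n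
  proof
    fix x
    have e: "(1 - u x) * g n x = 1 - u x ^ n" unfolding g_def using one_diff_power_eq by metis
    have "(1 - u x) * G x - 1 = (1 - u x) * (G x - g n x) + ((1 - u x) * g n x - 1)"
      by (simp add: algebra_simps)
    then show "h x = (1 - u x) * (G x - g n x) + (- (u x ^ n))" unfolding h_def e by simp
  qed
  define Q where "Q = N (\<lambda>x. 1 - u x)"
  have Q0: "0 \<le> Q" unfolding Q_def using N_nonneg omC by blast
  have hb: "N h \<le> max (Q * N (\<lambda>x. g n x - G x)) (K * a ^ n)" for n
  proof -
    have c1: "(\<lambda>x. G x - g n x) \<in> Cbd v" using Cbd_diff[OF GC gC] .
    have "N h \<le> max (N (\<lambda>x. (1 - u x) * (G x - g n x))) (N (\<lambda>x. - (u x ^ n)))"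
      unfolding hrep[of n] by (rule N_add[OF Cbd_mult[OF omC c1] Cbd_uminus[OF pC]])
    also have "\<dots> \<le> max (Q * N (\<lambda>x. g n x - G x)) (K * a ^ n)"
    proof (rule max.mono)
      show "N (\<lambda>x. (1 - u x) * (G x - g n x)) \<le> Q * N (\<lambda>x. g n x - G x)"
        unfolding Q_def using N_mult[OF omC c1] N_commute[OF GC gC] by simp
      show "N (\<lambda>x. - (u x ^ n)) \<le> K * a ^ n" using N_uminus[OF pC] pN by simp
    qed
    finally show ?thesis .
  qed
  have "N h < e" if e: "e > 0" for e
  proof -
    obtain n1 where n1: "\<forall>n\<ge>n1. N (\<lambda>x. g n x - G x) < e / (Q + 1)" using G e Q0 by (meson add_nonneg_pos divide_pos_pos zero_less_one)
    obtain n2 where n2: "\<forall>n\<ge>n2. a ^ n < e / (K + 1)" using pow_small[OF a0 a1, of "e / (K + 1)"] e K0 by (meson add_nonneg_pos divide_pos_pos zero_less_one)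
    define n where "n = max n1 n2"
    have "Q * N (\<lambda>x. g n x - G x) \<le> Q * (e / (Q + 1))"
      using n1 Q0 unfolding n_def by (intro mult_left_mono) (auto simp: less_imp_le)
    also have "\<dots> < e" using Q0 e by (simp add: field_simps)
    finally have A: "Q * N (\<lambda>x. g n x - G x) < e" .
    have "K * a ^ n \<le> K * (e / (K + 1))"
      using n2 K0 unfolding n_def by (intro mult_left_mono) (auto simp: less_imp_le)
    also have "\<dots> < e" using K0 e by (simp add: field_simps)
    finally have B: "K * a ^ n < e" .
    show ?thesis using hb[of n] A B by linarith
  qed
  then have "\<not> 0 < N h" using less_irrefl by blast
  then have "N h \<le> 0" by simp
  moreover have hC: "h \<in> Cbd v" unfolding h_def using Cbd_diff[OF Cbd_mult[OF omC GC] Cbd_one] .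
  ultimately have "h = (\<lambda>x. 0)" using N_zero N_nonneg by (meson antisym)
  then have "h x0 = 0" by simp
  moreover have "u x0 = 1" unfolding u_def c_def[symmetric] using c0 by simp
  ultimately show False unfolding h_def by simp
qed

lemma sup_le_N: "f \<in> Cbd v \<Longrightarrow> supnorm v f \<le> N f"
  by (rule sup_least) (rule N_pt)


lemma baire:
  "\<exists>n f0 r. 0 < r \<and> f0 \<in> Cbd v \<and> (\<forall>h\<in>Cbd v. supnorm v (\<lambda>x. h x - f0 x) < r \<longrightarrow>
      (\<forall>\<epsilon>>0. \<exists>g\<in>Cbd v. N g \<le> real n \<and> supnorm v (\<lambda>x. h x - g x) < \<epsilon>))"
proof (rule ccontr)
  assume H: "\<not> ?thesis"
  define P where "P n f0 r he \<longleftrightarrow> (0 < r \<and> f0 \<in> Cbd v \<longrightarrow> fst he \<in> Cbd v \<and>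
      supnorm v (\<lambda>x. fst he x - f0 x) < r \<and> 0 < snd he \<and>
      (\<forall>g\<in>Cbd v. N g \<le> real n \<longrightarrow> snd he \<le> supnorm v (\<lambda>x. fst he x - g x)))"
    for n f0 r and he :: "('x \<Rightarrow> 'k) \<times> real"
  have ex: "\<exists>he. P n f0 r he" for n and f0 :: "'x \<Rightarrow> 'k" and r
  proof (cases "0 < r \<and> f0 \<in> Cbd v")
    case True
    then have "\<not> (\<forall>h\<in>Cbd v. supnorm v (\<lambda>x. h x - f0 x) < r \<longrightarrow>
      (\<forall>\<epsilon>>0. \<exists>g\<in>Cbd v. N g \<le> real n \<and> supnorm v (\<lambda>x. h x - g x) < \<epsilon>))" using H by blast
    then obtain h where h: "h \<in> Cbd v" "supnorm v (\<lambda>x. h x - f0 x) < r"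
      "\<not> (\<forall>\<epsilon>>0. \<exists>g\<in>Cbd v. N g \<le> real n \<and> supnorm v (\<lambda>x. h x - g x) < \<epsilon>)" by blast
    then obtain e where e: "e > 0" "\<forall>g\<in>Cbd v. \<not> (N g \<le> real n \<and> supnorm v (\<lambda>x. h x - g x) < e)"
      by blast
    have "P n f0 r (h, e)" unfolding P_def using h e by (auto simp: not_less)
    then show ?thesis by blast
  next
    case False
    then have "P n f0 r x" for x unfolding P_def by blast
    then show ?thesis by blast
  qed
  define F where "F n f0 r = fst (SOME he. P n f0 r he)" for n f0 r
  define E where "E n f0 r = snd (SOME he. P n f0 r he)" for n f0 r
  have FE: "\<And>n f0 r. 0 < r \<Longrightarrow> f0 \<in> Cbd v \<Longrightarrow> F n f0 r \<in> Cbd v \<and>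
      supnorm v (\<lambda>x. F n f0 r x - f0 x) < r \<and> 0 < E n f0 r \<and>
      (\<forall>g\<in>Cbd v. N g \<le> real n \<longrightarrow> E n f0 r \<le> supnorm v (\<lambda>x. F n f0 r x - g x))"
  proof -
    fix n and f0 :: "'x \<Rightarrow> 'k" and r assume "0 < (r::real)" "f0 \<in> Cbd v"
    moreover have "P n f0 r (SOME he. P n f0 r he)" by (rule someI_ex[OF ex])
    ultimately show "?thesis n f0 r" unfolding P_def F_def E_def by blast
  qed
  define sq where "sq = rec_nat ((\<lambda>x. 0) :: 'x \<Rightarrow> 'k, 1::real)
      (\<lambda>n p. (F n (fst p) (snd p), min (snd p / 2) (E n (fst p) (snd p))))"
  define a where "a n = fst (sq n)" for n
  define r where "r n = snd (sq n)" for n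
  have sq0: "a 0 = (\<lambda>x. 0)" "r 0 = 1" by (simp_all add: a_def r_def sq_def)
  have sqS: "a (Suc n) = F n (a n) (r n)" "r (Suc n) = min (r n / 2) (E n (a n) (r n))" for n
    by (simp_all add: a_def r_def sq_def)
  have inv: "a n \<in> Cbd v \<and> 0 < r n" for n
  proof (induction n)
    case 0 then show ?case using sq0 Cbd_zero by simp
  next
    case (Suc n) then show ?case using FE[of "r n" "a n" n] sqS[of n] by simp
  qed
  have aC: "a n \<in> Cbd v" and rpos: "0 < r n" for n using inv by auto
  have step: "supnorm v (\<lambda>x. a (Suc n) x - a n x) < r n" for n using FE[OF rpos[of n] aC[of n], of n] sqS by simp
  have rS: "r (Suc n) \<le> r n / 2" for n using sqS by simp
  have avoid: "\<forall>g\<in>Cbd v. N g \<le> real n \<longrightarrow> r (Suc n) \<le> supnorm v (\<lambda>x. a (Suc n) x - g x)" for n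
  proof (intro ballI impI)
    fix g assume "g \<in> Cbd v" "N g \<le> real n"
    then have "E n (a n) (r n) \<le> supnorm v (\<lambda>x. F n (a n) (r n) x - g x)"
      using FE[OF rpos[of n] aC[of n], of n] by blast
    then show "r (Suc n) \<le> supnorm v (\<lambda>x. a (Suc n) x - g x)" using sqS[of n] by simp
  qed
  have rdec: "r m \<le> r n" if "n \<le> m" for n m
  proof -
    have "r (Suc k) \<le> r k" for k using rS[of k] rpos[of k] by simp
    then show ?thesis using that by (rule antimono_iff_le_Suc[THEN iffD2, unfolded antimono_def, rule_format])
  qed
  have rpow: "r n \<le> (1/2) ^ n" for n
  proof (induction n)
    case 0 then show ?case using sq0 by simp
  next
    case (Suc n) then show ?case using rS[of n] by simp
  qed
  have nest: "supnorm v (\<lambda>x. a (n + k) x - a n x) < r n" for n k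
  proof (induction k)
    case 0 then show ?case using rpos[of n] by (simp add: sup_const0)
  next
    case (Suc k)
    have "supnorm v (\<lambda>x. a (n + Suc k) x - a n x) \<le>
        max (supnorm v (\<lambda>x. a (Suc (n + k)) x - a (n + k) x)) (supnorm v (\<lambda>x. a (n + k) x - a n x))"
      using sup_tri3[OF aC aC aC] by simp
    moreover have "supnorm v (\<lambda>x. a (Suc (n + k)) x - a (n + k) x) < r n"
      using step[of "n + k"] rdec[of n "n + k"] by simp
    ultimately show ?case using Suc by simp
  qed
  have nest2: "supnorm v (\<lambda>x. a m x - a n x) < r n" if "n \<le> m" for n m
    using nest[of n "m - n"] that by simp
  have cauchy: "\<exists>M. \<forall>m\<ge>M. \<forall>n\<ge>M. supnorm v (\<lambda>x. a m x - a n x) < e" if e: "e > 0" for e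
  proof -
    obtain M where M: "(1/2::real) ^ M < e" using real_arch_pow_inv[of e "1/2"] e by auto
    have "supnorm v (\<lambda>x. a m x - a n x) < e" if "M \<le> m" "M \<le> n" for m n
    proof (cases "n \<le> m")
      case True
      then have "supnorm v (\<lambda>x. a m x - a n x) < r n" by (rule nest2)
      also have "\<dots> \<le> r M" using rdec that by blast
      also have "\<dots> \<le> (1/2) ^ M" by (rule rpow)
      finally show ?thesis using M by linarith
    next
      case False
      then have "supnorm v (\<lambda>x. a n x - a m x) < r m" using nest2 by simp
      also have "\<dots> \<le> r M" using rdec that by blast
      also have "\<dots> \<le> (1/2) ^ M" by (rule rpow)
      finally show ?thesis using M sup_commute by (metis less_trans)
    qed
    then show ?thesis by blast
  qed
  obtain l where lC: "l \<in> Cbd v" and l: "\<forall>e>0. \<exists>M. \<forall>n\<ge>M. supnorm v (\<lambda>x. a n x - l x) < e"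
    using sup_complete[of a, OF aC cauchy] by blast
  obtain m :: nat where m: "N l \<le> real m" using real_arch_simple by blast
  have A: "r (Suc m) \<le> supnorm v (\<lambda>x. a (Suc m) x - l x)" using avoid[of m] lC m by blast
  obtain M where M: "\<forall>n\<ge>M. supnorm v (\<lambda>x. a n x - l x) < r (Suc m)" using l rpos by blast
  define j where "j = max M (Suc m)"
  have "supnorm v (\<lambda>x. a (Suc m) x - l x) \<le> max (supnorm v (\<lambda>x. a (Suc m) x - a j x)) (supnorm v (\<lambda>x. a j x - l x))"
    by (rule sup_tri3[OF aC aC lC])
  moreover have "supnorm v (\<lambda>x. a (Suc m) x - a j x) < r (Suc m)"
    using nest2[of "Suc m" j] sup_commute[of "a (Suc m)" "a j"] j_def by simp
  moreover have "supnorm v (\<lambda>x. a j x - l x) < r (Suc m)" using M j_def by simp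
  ultimately show False using A by simp
qed


lemma open_map: "\<exists>C. \<forall>f\<in>Cbd v. N f \<le> C * supnorm v f"
proof -
  obtain n f0 r where r: "0 < r" and f0C: "f0 \<in> Cbd v" and B: "\<forall>h\<in>Cbd v. supnorm v (\<lambda>x. h x - f0 x) < r \<longrightarrow>
      (\<forall>\<epsilon>>0. \<exists>g\<in>Cbd v. N g \<le> real n \<and> supnorm v (\<lambda>x. h x - g x) < \<epsilon>)"
    using baire by blast
  define M where "M = real n"
  have M0: "0 \<le> M" unfolding M_def by simp
  have A: "\<exists>g\<in>Cbd v. N g \<le> M \<and> supnorm v (\<lambda>x. h x - g x) < \<epsilon>"
    if hC: "h \<in> Cbd v" and hs: "supnorm v h < r" and e: "\<epsilon> > 0" for h \<epsilon>
  proof -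
    have hf: "(\<lambda>x. f0 x + h x) \<in> Cbd v" using Cbd_add[OF f0C hC] .
    have "(\<lambda>x. f0 x + h x - f0 x) = h" by simp
    then have "supnorm v (\<lambda>x. f0 x + h x - f0 x) < r" using hs by simp
    then obtain g1 where g1: "g1 \<in> Cbd v" "N g1 \<le> M" "supnorm v (\<lambda>x. f0 x + h x - g1 x) < \<epsilon>"
      using B[rule_format, OF hf] e unfolding M_def by auto
    have "supnorm v (\<lambda>x. f0 x - f0 x) < r" using r by (simp add: sup_const0)
    then obtain g2 where g2: "g2 \<in> Cbd v" "N g2 \<le> M" "supnorm v (\<lambda>x. f0 x - g2 x) < \<epsilon>"
      using B[rule_format, OF f0C] e unfolding M_def by auto
    define g where "g = (\<lambda>x. g1 x - g2 x)"
    have gC: "g \<in> Cbd v" unfolding g_def using Cbd_diff[OF g1(1) g2(1)] .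
    have "N g \<le> max (N g1) (N (\<lambda>x. - g2 x))"
    proof -
      have "g = (\<lambda>x. g1 x + - g2 x)" unfolding g_def by simp
      then show ?thesis using N_add[OF g1(1) Cbd_uminus[OF g2(1)]] by simp
    qed
    then have Ng: "N g \<le> M" using g1 g2 N_uminus[OF g2(1)] by simp
    have "(\<lambda>x. h x - g x) = (\<lambda>x. (f0 x + h x - g1 x) + (g2 x - f0 x))" unfolding g_def by (simp add: algebra_simps)
    then have "supnorm v (\<lambda>x. h x - g x) \<le> max (supnorm v (\<lambda>x. f0 x + h x - g1 x)) (supnorm v (\<lambda>x. g2 x - f0 x))"
      using sup_add[OF Cbd_diff[OF hf g1(1)] Cbd_diff[OF g2(1) f0C]] by simp
    also have "\<dots> < \<epsilon>" using g1(3) g2(3) sup_commute[of g2 f0] by simp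
    finally show ?thesis using gC Ng by blast
  qed
  obtain p where p: "0 < v p" "v p < 1" using v_pi by blast
  define q where "q = v p"
  have q: "0 < q" "q < 1" using p q_def by auto
  have A2: "\<exists>g\<in>Cbd v. N g \<le> M * q ^ j \<and> supnorm v (\<lambda>x. h x - g x) < r * q ^ Suc j"
    if hC: "h \<in> Cbd v" and hs: "supnorm v h < r * q ^ j" for h j
  proof -
    define c where "c = p ^ j"
    have vc: "v c = q ^ j" unfolding c_def q_def by (simp add: v_power)
    have qj: "0 < q ^ j" using q by simp
    have c0: "c \<noteq> 0"
    proof
      assume "c = 0" then have "v c = 0" by simp
      then show False using vc qj by linarith
    qed
    define h' where "h' = (\<lambda>x. inverse c * h x)"
    have h'C: "h' \<in> Cbd v" unfolding h'_def using Cbd_smult[OF hC] .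
    have "supnorm v h' = inverse (q ^ j) * supnorm v h" unfolding h'_def using sup_smult[OF hC] vc v_inverse by simp
    also have "\<dots> < inverse (q ^ j) * (r * q ^ j)" using hs qj by (intro mult_strict_left_mono) auto
    also have "\<dots> = r" using qj q by (simp add: field_simps)
    finally have "supnorm v h' < r" .
    then obtain g where g: "g \<in> Cbd v" "N g \<le> M" "supnorm v (\<lambda>x. h' x - g x) < r * q"
      using A[OF h'C \<open>supnorm v h' < r\<close>, of "r * q"] r q by auto
    define g' where "g' = (\<lambda>x. c * g x)"
    have g'C: "g' \<in> Cbd v" unfolding g'_def using Cbd_smult[OF g(1)] .
    have "N g' = q ^ j * N g" unfolding g'_def using N_smult[OF g(1)] vc by simp
    also have "\<dots> \<le> q ^ j * M" using g(2) qj by (intro mult_left_mono) auto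
    finally have Ng': "N g' \<le> M * q ^ j" by (simp add: mult.commute)
    have "(\<lambda>x. h x - g' x) = (\<lambda>x. c * (h' x - g x))" unfolding g'_def h'_def using c0
      by (simp add: algebra_simps mult.assoc[symmetric])
    then have "supnorm v (\<lambda>x. h x - g' x) = q ^ j * supnorm v (\<lambda>x. h' x - g x)"
      using sup_smult[OF Cbd_diff[OF h'C g(1)]] vc by simp
    also have "\<dots> < q ^ j * (r * q)" using g(3) qj by (intro mult_strict_left_mono) auto
    also have "\<dots> = r * q ^ Suc j" by (simp add: algebra_simps)
    finally show ?thesis using g'C Ng' by blast
  qed
  define P where "P j h g \<longleftrightarrow> (h \<in> Cbd v \<and> supnorm v h < r * q ^ j \<longrightarrow>
      g \<in> Cbd v \<and> N g \<le> M * q ^ j \<and> supnorm v (\<lambda>x. h x - g x) < r * q ^ Suc j)"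
    for j and h g :: "'x \<Rightarrow> 'k"
  have Pex: "\<exists>g. P j h g" for j h unfolding P_def using A2 by blast
  define Gf where "Gf j h = (SOME g. P j h g)" for j h
  have GfP: "P j h (Gf j h)" for j h unfolding Gf_def by (rule someI_ex[OF Pex])
  have C: "N h \<le> M" if hC: "h \<in> Cbd v" and hs: "supnorm v h < r" for h
  proof -
    define R where "R = rec_nat h (\<lambda>j R. (\<lambda>x. R x - Gf j R x))"
    have R0: "R 0 = h" by (simp add: R_def)
    have RS: "R (Suc j) = (\<lambda>x. R j x - Gf j (R j) x)" for j by (simp add: R_def)
    have inv: "R j \<in> Cbd v \<and> supnorm v (R j) < r * q ^ j" for j
    proof (induction j)
      case 0 then show ?case using R0 hC hs by simp
    next
      case (Suc j)
      then have "Gf j (R j) \<in> Cbd v \<and> supnorm v (\<lambda>x. R j x - Gf j (R j) x) < r * q ^ Suc j"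
        using GfP[of j "R j"] unfolding P_def by blast
      then show ?case using Suc Cbd_diff RS by auto
    qed
    have RC: "R j \<in> Cbd v" for j using inv by blast
    have GP: "Gf j (R j) \<in> Cbd v \<and> N (Gf j (R j)) \<le> M * q ^ j" for j
      using GfP[of j "R j"] inv[of j] unfolding P_def by blast
    define S where "S j = (\<lambda>x. h x - R j x)" for j
    have SC: "S j \<in> Cbd v" for j unfolding S_def using Cbd_diff[OF hC RC] .
    have Sd: "N (\<lambda>x. S (Suc j) x - S j x) \<le> M * q ^ j" for j
    proof -
      have "(\<lambda>x. S (Suc j) x - S j x) = Gf j (R j)" unfolding S_def RS by (rule ext) simp
      then show ?thesis using GP by simp
    qed
    obtain G0 where G0C: "G0 \<in> Cbd v" and G0c: "\<forall>e>0. \<exists>M. \<forall>n\<ge>M. N (\<lambda>x. S n x - G0 x) < e"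
      and G0b: "\<forall>n. N (\<lambda>x. G0 x - S n x) \<le> M * q ^ n"
      using N_geom[OF SC M0 _ q(2) Sd] q by auto
    have "(\<lambda>x. G0 x - S 0 x) = G0" unfolding S_def R0 by simp
    then have NG: "N G0 \<le> M" using G0b[rule_format, of 0] by simp
    have small: "supnorm v (\<lambda>x. h x - G0 x) < e" if e: "e > 0" for e
    proof -
      obtain n1 where n1: "\<forall>n\<ge>n1. N (\<lambda>x. S n x - G0 x) < e" using G0c e by blast
      obtain n2 where n2: "\<forall>n\<ge>n2. q ^ n < e / r" using pow_small[of q "e / r"] q e r by auto
      define m where "m = max n1 n2"
      have "supnorm v (\<lambda>x. h x - G0 x) \<le> max (supnorm v (\<lambda>x. h x - S m x)) (supnorm v (\<lambda>x. S m x - G0 x))"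
        by (rule sup_tri3[OF hC SC G0C])
      moreover have "(\<lambda>x. h x - S m x) = R m" unfolding S_def by simp
      moreover have "supnorm v (R m) < e"
      proof -
        have "supnorm v (R m) < r * q ^ m" using inv by blast
        also have "\<dots> < r * (e / r)" using n2 r unfolding m_def by (intro mult_strict_left_mono) auto
        also have "\<dots> = e" using r by simp
        finally show ?thesis .
      qed
      moreover have "supnorm v (\<lambda>x. S m x - G0 x) < e"
      proof -
        have "N (\<lambda>x. S m x - G0 x) < e" using n1 unfolding m_def by simp
        then show ?thesis using sup_le_N[OF Cbd_diff[OF SC G0C], of m] by linarith
      qed
      ultimately show ?thesis by simp
    qed
    then have "\<not> 0 < supnorm v (\<lambda>x. h x - G0 x)" using less_irrefl by blast
    then have "(\<lambda>x. h x - G0 x) = (\<lambda>x. 0)" using sup_zero[OF Cbd_diff[OF hC G0C]] by simp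
    then have "h = G0"
    proof -
      assume z: "(\<lambda>x. h x - G0 x) = (\<lambda>x. 0)"
      show "h = G0"
      proof
        fix x have "h x - G0 x = 0" using fun_cong[OF z, of x] by simp
        then show "h x = G0 x" by simp
      qed
    qed
    then show ?thesis using NG by simp
  qed
  define K where "K = M / (r * q)"
  have "N f \<le> K * supnorm v f" if fC: "f \<in> Cbd v" for f
  proof (cases "supnorm v f \<le> 0")
    case True
    then have "f = (\<lambda>x. 0)" using sup_zero fC by blast
    then show ?thesis using N_zero0 by (simp add: sup_const0)
  next
    case False
    define t where "t = supnorm v f"
    have t: "0 < t" using False t_def by simp
    obtain c where c: "c \<noteq> 0" "r * q \<le> v c * t" "v c * t < r"
      using scale_exists[OF p t r] q_def by blast
    have vc: "0 < v c" using c(1) v_nonneg[of c] v_zero_iff[of c] by linarith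
    have "supnorm v (\<lambda>x. c * f x) < r" using sup_smult[OF fC] c t_def by simp
    then have "N (\<lambda>x. c * f x) \<le> M" using C Cbd_smult[OF fC] by blast
    then have "v c * N f \<le> M" using N_smult[OF fC] by simp
    have m1: "r * q * N f \<le> v c * t * N f" using c(2) N_nonneg[OF fC] by (rule mult_right_mono)
    have m2: "v c * t * N f = (v c * N f) * t" by (simp add: algebra_simps)
    have m3: "(v c * N f) * t \<le> M * t" using \<open>v c * N f \<le> M\<close> t by (intro mult_right_mono) auto
    have rq: "0 < r * q" using r q by simp
    have "r * q * N f \<le> M * t" using m1 m2 m3 by linarith
    then have "N f * (r * q) \<le> M * t" by (simp add: mult.commute)
    then have "N f \<le> (M * t) / (r * q)" using rq by (simp add: pos_le_divide_eq)
    then show ?thesis unfolding K_def t_def by simp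
  qed
  then show ?thesis by blast
qed

end


lemma op_le:
  assumes "\<And>x. nV (T x) \<le> C * nV x" "0 \<le> C"
  shows "opnorm nV T \<le> C"
  unfolding opnorm_def
  by (rule cInf_lower) (use assms in \<open>auto intro: bdd_belowI[of _ 0]\<close>)

lemma op_nonneg:
  assumes "\<And>x. nV (T x) \<le> C * nV x" "\<And>x. 0 \<le> nV x"
  shows "0 \<le> opnorm nV T"
  unfolding opnorm_def
proof (rule cInf_greatest)
  have "\<forall>x. nV (T x) \<le> max C 0 * nV x"
    using assms by (meson max.cobounded1 mult_right_mono order_trans)
  then have "max C 0 \<in> {C. 0 \<le> C \<and> (\<forall>x. nV (T x) \<le> C * nV x)}" by simp
  then show "{C. 0 \<le> C \<and> (\<forall>x. nV (T x) \<le> C * nV x)} \<noteq> {}" by blast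
qed auto

lemma op_bound:
  assumes b: "\<And>x. nV (T x) \<le> C * nV x" and nn: "\<And>x. 0 \<le> nV x"
    and z: "\<And>x. nV x = 0 \<longleftrightarrow> x = 0" and T0: "T 0 = 0"
  shows "nV (T x) \<le> opnorm nV T * nV x"
proof (cases "nV x = 0")
  case True
  then show ?thesis using z[of 0] z[of x] T0 by simp
next
  case False
  then have px: "0 < nV x" using nn[of x] by simp
  have "nV (T x) / nV x \<le> opnorm nV T"
    unfolding opnorm_def
  proof (rule cInf_greatest)
    have "\<forall>x. nV (T x) \<le> max C 0 * nV x"
      using b nn by (meson max.cobounded1 mult_right_mono order_trans)
    then have "max C 0 \<in> {C. 0 \<le> C \<and> (\<forall>x. nV (T x) \<le> C * nV x)}" by simp
    then show "{C. 0 \<le> C \<and> (\<forall>x. nV (T x) \<le> C * nV x)} \<noteq> {}" by blast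
  next
    fix D assume "D \<in> {C. 0 \<le> C \<and> (\<forall>x. nV (T x) \<le> C * nV x)}"
    then show "nV (T x) / nV x \<le> D" using px by (simp add: divide_le_eq)
  qed
  then show ?thesis using px by (simp add: divide_le_eq)
qed

lemma part1:
  fixes v :: "'k::field \<Rightarrow> real"
    and sm :: "'k \<Rightarrow> 'a::ring_1 \<Rightarrow> 'a" and nA and \<phi> :: "('x::topological_space \<Rightarrow> 'k) \<Rightarrow> 'a"
  assumes lfv: "local_field v"
    and BA: "banach_k_algebra v sm nA" and HOM: "unital_k_alg_hom v sm \<phi>"
    and INJ: "inj_on \<phi> (Cbd v)" and CL: "nclosed nA (\<phi> ` Cbd v)"
  shows "sup_continuous_on_Cbd v nA \<phi>"
proof -
  interpret lf v by (rule lf.intro[OF lfv])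
  have hadd: "\<phi> (\<lambda>x. f x + g x) = \<phi> f + \<phi> g" if "f \<in> Cbd v" "g \<in> Cbd v" for f g
    using HOM that unfolding unital_k_alg_hom_def by simp
  have hmul: "\<phi> (\<lambda>x. f x * g x) = \<phi> f * \<phi> g" if "f \<in> Cbd v" "g \<in> Cbd v" for f g
    using HOM that unfolding unital_k_alg_hom_def by simp
  have hsm: "\<phi> (\<lambda>x. c * f x) = sm c (\<phi> f)" if "f \<in> Cbd v" for f c
    using HOM that unfolding unital_k_alg_hom_def by simp
  have h0: "\<phi> (\<lambda>x. 0) = 0"
  proof -
    have "\<phi> (\<lambda>x. 0 + 0) = \<phi> (\<lambda>x. 0) + \<phi> (\<lambda>x. 0)" using hadd[OF Cbd_zero Cbd_zero] .
    then show ?thesis by simp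
  qed
  have hdiff: "\<phi> (\<lambda>x. f x - g x) = \<phi> f - \<phi> g" if f: "f \<in> Cbd v" and g: "g \<in> Cbd v" for f g
  proof -
    have "\<phi> (\<lambda>x. (f x - g x) + g x) = \<phi> (\<lambda>x. f x - g x) + \<phi> g" using hadd[OF Cbd_diff[OF f g] g] .
    then show ?thesis by (simp add: eq_diff_eq)
  qed
  have nn: "0 \<le> nA y" for y using BA unfolding banach_k_algebra_def by simp
  have nz: "nA y = 0 \<longleftrightarrow> y = 0" for y using BA unfolding banach_k_algebra_def by simp
  have nu: "nA (y + z) \<le> max (nA y) (nA z)" for y z using BA unfolding banach_k_algebra_def by simp
  have nm: "nA (y * z) \<le> nA y * nA z" for y z using BA unfolding banach_k_algebra_def by simp
  have ns: "nA (sm c y) = v c * nA y" for c y using BA unfolding banach_k_algebra_def by simp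
  have nc: "kcauchy nA s \<Longrightarrow> \<exists>l. kconverges nA s l" for s using BA unfolding banach_k_algebra_def by simp
  define N where "N f = nA (\<phi> f)" for f :: "'x \<Rightarrow> 'k"
  interpret normN v N
  proof unfold_locales
    fix f :: "'x \<Rightarrow> 'k" show "0 \<le> N f" unfolding N_def by (rule nn)
  next
    fix f :: "'x \<Rightarrow> 'k" assume f: "f \<in> Cbd v" and "N f = 0"
    then have "\<phi> f = \<phi> (\<lambda>x. 0)" unfolding N_def using nz h0 by simp
    then show "f = (\<lambda>x. 0)" using INJ f Cbd_zero unfolding inj_on_def by blast
  next
    fix f g :: "'x \<Rightarrow> 'k" assume "f \<in> Cbd v" "g \<in> Cbd v"
    then show "N (\<lambda>x. f x + g x) \<le> max (N f) (N g)" unfolding N_def using hadd nu by simp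
  next
    fix f :: "'x \<Rightarrow> 'k" and c assume "f \<in> Cbd v"
    then show "N (\<lambda>x. c * f x) = v c * N f" unfolding N_def using hsm ns by simp
  next
    fix f g :: "'x \<Rightarrow> 'k" assume "f \<in> Cbd v" "g \<in> Cbd v"
    then show "N (\<lambda>x. f x * g x) \<le> N f * N g" unfolding N_def using hmul nm by simp
  next
    fix s :: "nat \<Rightarrow> 'x \<Rightarrow> 'k"
    assume s: "\<And>i. s i \<in> Cbd v"
      and C: "\<And>e. e > 0 \<Longrightarrow> \<exists>M. \<forall>m\<ge>M. \<forall>n\<ge>M. N (\<lambda>x. s m x - s n x) < e"
    have "kcauchy nA (\<lambda>n. \<phi> (s n))"
      unfolding kcauchy_def using C hdiff[OF s s] unfolding N_def by simp
    then obtain l where l: "kconverges nA (\<lambda>n. \<phi> (s n)) l" using nc by blast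
    have "\<forall>i. \<phi> (s i) \<in> \<phi> ` Cbd v" using s by blast
    then have "l \<in> \<phi> ` Cbd v" using CL[unfolded nclosed_def, rule_format, of "\<lambda>n. \<phi> (s n)"] l by blast
    then obtain f where fC: "f \<in> Cbd v" and lf: "l = \<phi> f" by blast
    have "\<forall>e>0. \<exists>M. \<forall>n\<ge>M. nA (\<phi> (s n) - l) < e"
      using l unfolding kconverges_def LIMSEQ_iff by (simp add: abs_of_nonneg nn)
    then have "\<forall>e>0. \<exists>M. \<forall>n\<ge>M. N (\<lambda>x. s n x - f x) < e"
      unfolding N_def lf using hdiff[OF s fC] by simp
    then show "\<exists>l\<in>Cbd v. \<forall>e>0. \<exists>M. \<forall>n\<ge>M. N (\<lambda>x. s n x - l x) < e" using fC by blast
  qed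
  obtain C where C: "\<forall>f\<in>Cbd v. N f \<le> C * supnorm v f" using open_map by blast
  define C' where "C' = max C 1"
  have C'0: "0 < C'" unfolding C'_def by simp
  show ?thesis
    unfolding sup_continuous_on_Cbd_def
  proof (intro ballI allI impI)
    fix f :: "'x \<Rightarrow> 'k" and e :: real assume f: "f \<in> Cbd v" and e: "0 < e"
    show "\<exists>d>0. \<forall>g\<in>Cbd v. supnorm v (\<lambda>x. g x - f x) < d \<longrightarrow> nA (\<phi> g - \<phi> f) < e"
    proof (intro exI[of _ "e / C'"] conjI ballI impI)
      show "0 < e / C'" using e C'0 by simp
      fix g :: "'x \<Rightarrow> 'k" assume g: "g \<in> Cbd v" and d: "supnorm v (\<lambda>x. g x - f x) < e / C'"
      have gf: "(\<lambda>x. g x - f x) \<in> Cbd v" using Cbd_diff[OF g f] .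
      have "nA (\<phi> g - \<phi> f) = N (\<lambda>x. g x - f x)" unfolding N_def using hdiff[OF g f] by simp
      also have "\<dots> \<le> C * supnorm v (\<lambda>x. g x - f x)" using C gf by blast
      also have "\<dots> \<le> C' * supnorm v (\<lambda>x. g x - f x)"
        unfolding C'_def using sup_nonneg[OF gf] by (intro mult_right_mono) auto
      also have "\<dots> < C' * (e / C')" using d C'0 by (intro mult_strict_left_mono) auto
      also have "\<dots> = e" using C'0 by simp
      finally show "nA (\<phi> g - \<phi> f) < e" .
    qed
  qed
qed


lemma part2:
  fixes v :: "'k::field \<Rightarrow> real"
    and smV :: "'k \<Rightarrow> 'v::ab_group_add \<Rightarrow> 'v" and nV and \<rho> :: "('x::topological_space \<Rightarrow> 'k) \<Rightarrow> ('v \<Rightarrow> 'v)"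
  assumes lfv: "local_field v"
    and KB: "k_banach_space v smV nV" and HOM: "unital_k_alg_hom_ops v smV nV \<rho>"
    and INJ: "inj_on \<rho> (Cbd v)" and CL: "opclosed nV (\<rho> ` Cbd v)"
  shows "\<exists>C. \<forall>f\<in>Cbd v. opnorm nV (\<rho> f) \<le> C * supnorm v f"
proof -
  interpret lf v by (rule lf.intro[OF lfv])
  have smul: "smV (c * d) y = smV c (smV d y)" for c d y using KB unfolding k_banach_space_def by simp
  have s1: "smV 1 y = y" for y using KB unfolding k_banach_space_def by simp
  have nn: "0 \<le> nV y" for y using KB unfolding k_banach_space_def by simp
  have nz: "nV y = 0 \<longleftrightarrow> y = 0" for y using KB unfolding k_banach_space_def by simp
  have nu: "nV (y + z) \<le> max (nV y) (nV z)" for y z using KB unfolding k_banach_space_def by simp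
  have ns: "nV (smV c y) = v c * nV y" for c y using KB unfolding k_banach_space_def by simp
  have nc: "kcauchy nV s \<Longrightarrow> \<exists>l. kconverges nV s l" for s using KB unfolding k_banach_space_def by simp
  have inB: "\<rho> f \<in> Bops smV nV" if "f \<in> Cbd v" for f using HOM that unfolding unital_k_alg_hom_ops_def by simp
  have radd: "\<rho> (\<lambda>x. f x + g x) = (\<lambda>w. \<rho> f w + \<rho> g w)" if "f \<in> Cbd v" "g \<in> Cbd v" for f g
    using HOM that unfolding unital_k_alg_hom_ops_def by simp
  have rmul: "\<rho> (\<lambda>x. f x * g x) = \<rho> f \<circ> \<rho> g" if "f \<in> Cbd v" "g \<in> Cbd v" for f g
    using HOM that unfolding unital_k_alg_hom_ops_def by simp
  have rsm: "\<rho> (\<lambda>x. c * f x) = (\<lambda>w. smV c (\<rho> f w))" if "f \<in> Cbd v" for f c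
    using HOM that unfolding unital_k_alg_hom_ops_def by simp
  have Tadd: "\<rho> f (y + z) = \<rho> f y + \<rho> f z" if "f \<in> Cbd v" for f y z
    using inB[OF that] unfolding Bops_def by simp
  have Tb: "\<exists>C. \<forall>y. nV (\<rho> f y) \<le> C * nV y" if "f \<in> Cbd v" for f
    using inB[OF that] unfolding Bops_def by simp
  have T0: "\<rho> f 0 = 0" if "f \<in> Cbd v" for f
  proof -
    have "\<rho> f (0 + 0) = \<rho> f 0 + \<rho> f 0" using Tadd[OF that] .
    then show ?thesis by simp
  qed
  have opb: "nV (\<rho> f y) \<le> opnorm nV (\<rho> f) * nV y" if f: "f \<in> Cbd v" for f y
  proof -
    obtain C where "\<forall>y. nV (\<rho> f y) \<le> C * nV y" using Tb[OF f] by blast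
    then show ?thesis using op_bound[of nV "\<rho> f" C, OF _ nn nz T0[OF f]] by blast
  qed
  have opnn: "0 \<le> opnorm nV (\<rho> f)" if f: "f \<in> Cbd v" for f
  proof -
    obtain C where "\<forall>y. nV (\<rho> f y) \<le> C * nV y" using Tb[OF f] by blast
    then show ?thesis using op_nonneg[of nV "\<rho> f" C, OF _ nn] by blast
  qed
  have r0: "\<rho> (\<lambda>x. 0) = (\<lambda>w. 0)"
  proof
    fix w
    have "\<rho> (\<lambda>x. 0 + 0) w = \<rho> (\<lambda>x. 0) w + \<rho> (\<lambda>x. 0) w" using radd[OF Cbd_zero Cbd_zero] by metis
    then show "\<rho> (\<lambda>x. 0) w = 0" by simp
  qed
  have rdiff: "\<rho> (\<lambda>x. f x - g x) = (\<lambda>w. \<rho> f w - \<rho> g w)" if f: "f \<in> Cbd v" and g: "g \<in> Cbd v" for f g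
  proof
    fix w
    have "\<rho> (\<lambda>x. (f x - g x) + g x) w = \<rho> (\<lambda>x. f x - g x) w + \<rho> g w" using radd[OF Cbd_diff[OF f g] g] by metis
    then show "\<rho> (\<lambda>x. f x - g x) w = \<rho> f w - \<rho> g w" by (simp add: eq_diff_eq)
  qed
  define N where "N f = opnorm nV (\<rho> f)" for f :: "'x \<Rightarrow> 'k"
  interpret normN v N
  proof unfold_locales
    fix f :: "'x \<Rightarrow> 'k" assume "f \<in> Cbd v" then show "0 \<le> N f" unfolding N_def by (rule opnn)
  next
    fix f :: "'x \<Rightarrow> 'k" assume f: "f \<in> Cbd v" and N0: "N f = 0"
    have "\<rho> f = \<rho> (\<lambda>x. 0)"
    proof
      fix w
      have "nV (\<rho> f w) \<le> 0" using opb[OF f, of w] N0 unfolding N_def by simp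
      then show "\<rho> f w = \<rho> (\<lambda>x. 0) w" using nn[of "\<rho> f w"] nz[of "\<rho> f w"] r0 by simp
    qed
    then show "f = (\<lambda>x. 0)" using INJ f Cbd_zero unfolding inj_on_def by blast
  next
    fix f g :: "'x \<Rightarrow> 'k" assume f: "f \<in> Cbd v" and g: "g \<in> Cbd v"
    show "N (\<lambda>x. f x + g x) \<le> max (N f) (N g)"
      unfolding N_def radd[OF f g]
    proof (rule op_le)
      fix y
      have "nV (\<rho> f y + \<rho> g y) \<le> max (nV (\<rho> f y)) (nV (\<rho> g y))" by (rule nu)
      also have "\<dots> \<le> max (opnorm nV (\<rho> f) * nV y) (opnorm nV (\<rho> g) * nV y)"
        using opb[OF f] opb[OF g] by (rule max.mono)
      also have "\<dots> = max (opnorm nV (\<rho> f)) (opnorm nV (\<rho> g)) * nV y"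
        using nn[of y] by (simp add: max_mult_distrib_right)
      finally show "nV (\<rho> f y + \<rho> g y) \<le> max (opnorm nV (\<rho> f)) (opnorm nV (\<rho> g)) * nV y" .
      show "0 \<le> max (opnorm nV (\<rho> f)) (opnorm nV (\<rho> g))" using opnn[OF f] by simp
    qed
  next
    fix f :: "'x \<Rightarrow> 'k" and c assume f: "f \<in> Cbd v"
    have cf: "(\<lambda>x. c * f x) \<in> Cbd v" using Cbd_smult[OF f] .
    have le: "opnorm nV (\<rho> (\<lambda>x. c * f x)) \<le> v c * opnorm nV (\<rho> f)"
      unfolding rsm[OF f]
    proof (rule op_le)
      fix y show "nV (smV c (\<rho> f y)) \<le> v c * opnorm nV (\<rho> f) * nV y"
        using opb[OF f, of y] v_nonneg[of c] by (simp add: ns mult_left_mono mult.assoc)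
      show "0 \<le> v c * opnorm nV (\<rho> f)" using opnn[OF f] v_nonneg[of c] by simp
    qed
    have ge: "v c * opnorm nV (\<rho> f) \<le> opnorm nV (\<rho> (\<lambda>x. c * f x))"
    proof (cases "c = 0")
      case True then show ?thesis using opnn[OF cf] by simp
    next
      case False
      have vc: "0 < v c" using False v_nonneg[of c] v_zero_iff[of c] by linarith
      have "opnorm nV (\<rho> f) \<le> inverse (v c) * opnorm nV (\<rho> (\<lambda>x. c * f x))"
      proof (rule op_le)
        fix y
        have "\<rho> f y = smV (inverse c) (\<rho> (\<lambda>x. c * f x) y)"
          unfolding rsm[OF f] using False by (simp add: smul[symmetric] s1)
        then have "nV (\<rho> f y) = inverse (v c) * nV (\<rho> (\<lambda>x. c * f x) y)" by (simp add: ns v_inverse)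
        also have "\<dots> \<le> inverse (v c) * (opnorm nV (\<rho> (\<lambda>x. c * f x)) * nV y)"
          using opb[OF cf, of y] vc by (intro mult_left_mono) auto
        finally show "nV (\<rho> f y) \<le> inverse (v c) * opnorm nV (\<rho> (\<lambda>x. c * f x)) * nV y" by (simp add: mult.assoc)
        show "0 \<le> inverse (v c) * opnorm nV (\<rho> (\<lambda>x. c * f x))" using opnn[OF cf] vc by simp
      qed
      then have "v c * opnorm nV (\<rho> f) \<le> v c * (inverse (v c) * opnorm nV (\<rho> (\<lambda>x. c * f x)))"
        using vc by (intro mult_left_mono) auto
      then show ?thesis using vc by (simp add: mult.assoc[symmetric])
    qed
    show "N (\<lambda>x. c * f x) = v c * N f" unfolding N_def using le ge by simp
  next
    fix f g :: "'x \<Rightarrow> 'k" assume f: "f \<in> Cbd v" and g: "g \<in> Cbd v"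
    show "N (\<lambda>x. f x * g x) \<le> N f * N g"
      unfolding N_def rmul[OF f g]
    proof (rule op_le)
      fix y
      have "nV (\<rho> f (\<rho> g y)) \<le> opnorm nV (\<rho> f) * nV (\<rho> g y)" by (rule opb[OF f])
      also have "\<dots> \<le> opnorm nV (\<rho> f) * (opnorm nV (\<rho> g) * nV y)"
        using opb[OF g] opnn[OF f] by (rule mult_left_mono)
      finally show "nV ((\<rho> f \<circ> \<rho> g) y) \<le> opnorm nV (\<rho> f) * opnorm nV (\<rho> g) * nV y" by (simp add: mult.assoc)
      show "0 \<le> opnorm nV (\<rho> f) * opnorm nV (\<rho> g)" using opnn[OF f] opnn[OF g] by simp
    qed
  next
    fix s :: "nat \<Rightarrow> 'x \<Rightarrow> 'k"
    assume s: "\<And>i. s i \<in> Cbd v"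
      and C: "\<And>e. e > 0 \<Longrightarrow> \<exists>M. \<forall>m\<ge>M. \<forall>n\<ge>M. N (\<lambda>x. s m x - s n x) < e"
    have pd: "nV (\<rho> (s m) w - \<rho> (s n) w) \<le> N (\<lambda>x. s m x - s n x) * nV w" for m n w
      using opb[OF Cbd_diff[OF s s], of m n w] rdiff[OF s s, of m n] unfolding N_def by simp
    have "\<exists>L. kconverges nV (\<lambda>n. \<rho> (s n) w) L" for w
    proof (rule nc)
      show "kcauchy nV (\<lambda>n. \<rho> (s n) w)"
        unfolding kcauchy_def
      proof (intro allI impI)
        fix e :: real assume e: "0 < e"
        obtain M where M: "\<forall>m\<ge>M. \<forall>n\<ge>M. N (\<lambda>x. s m x - s n x) < e / (nV w + 1)"
          using C[of "e / (nV w + 1)"] e nn[of w] by (meson add_nonneg_pos divide_pos_pos zero_less_one)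
        have "nV (\<rho> (s m) w - \<rho> (s n) w) < e" if "M \<le> m" "M \<le> n" for m n
        proof -
          have "nV (\<rho> (s m) w - \<rho> (s n) w) \<le> N (\<lambda>x. s m x - s n x) * nV w" by (rule pd)
          also have "\<dots> \<le> e / (nV w + 1) * nV w"
            using M that nn[of w] by (intro mult_right_mono) (auto simp: less_imp_le)
          also have "\<dots> < e" using e nn[of w] by (simp add: field_simps)
          finally show ?thesis .
        qed
        then show "\<exists>N. \<forall>m\<ge>N. \<forall>n\<ge>N. nV (\<rho> (s m) w - \<rho> (s n) w) < e" by blast
      qed
    qed
    then obtain L where L: "\<And>w. kconverges nV (\<lambda>n. \<rho> (s n) w) (L w)" by metis
    have Lc: "\<forall>e>0. \<exists>M. \<forall>n\<ge>M. nV (\<rho> (s n) w - L w) < e" for w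
      using L[of w] unfolding kconverges_def LIMSEQ_iff by (simp add: abs_of_nonneg nn)
    have L0: "L 0 = 0"
    proof -
      have "\<forall>e>0. nV (- L 0) < e"
      proof (intro allI impI)
        fix e :: real assume "0 < e"
        then obtain M where "\<forall>n\<ge>M. nV (\<rho> (s n) 0 - L 0) < e" using Lc by blast
        then have "nV (\<rho> (s M) 0 - L 0) < e" by blast
        then show "nV (- L 0) < e" using T0[OF s, of M] by simp
      qed
      then have "nV (- L 0) \<le> 0" by (meson not_less less_irrefl)
      then have "- L 0 = 0" using nn nz by (meson antisym)
      then show ?thesis by simp
    qed
    have keyp: "nV (\<rho> (s n) w - L w) \<le> e * nV w" if H1: "\<forall>m\<ge>M. \<forall>n\<ge>M. N (\<lambda>x. s m x - s n x) < e" and H2: "M \<le> n" and H3: "0 < e"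
      for n M e w
      proof (cases "nV w = 0")
        case True
        then have "w = 0" using nz by simp
        then show ?thesis using T0[OF s] L0 nz[of 0] by simp
      next
        case False
        then have pw: "0 < nV w" using nn[of w] by simp
        show ?thesis
        proof (rule ccontr)
          assume "\<not> ?thesis"
          then have gt: "e * nV w < nV (\<rho> (s n) w - L w)" by simp
          obtain M' where M': "\<forall>m\<ge>M'. nV (\<rho> (s m) w - L w) < e * nV w" using Lc[of w] pw H3 by (meson mult_pos_pos)
          define m where "m = max M M'"
          have "nV (\<rho> (s n) w - L w) \<le> max (nV (\<rho> (s n) w - \<rho> (s m) w)) (nV (\<rho> (s m) w - L w))"
            using nu[of "\<rho> (s n) w - \<rho> (s m) w" "\<rho> (s m) w - L w"] by simp
          moreover have "nV (\<rho> (s n) w - \<rho> (s m) w) < e * nV w"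
          proof -
            have "nV (\<rho> (s n) w - \<rho> (s m) w) \<le> N (\<lambda>x. s n x - s m x) * nV w" by (rule pd)
            also have "\<dots> < e * nV w" using H1 H2 pw unfolding m_def by (intro mult_strict_right_mono) auto
            finally show ?thesis .
          qed
          moreover have "nV (\<rho> (s m) w - L w) < e * nV w" using M' unfolding m_def by simp
          ultimately show False using gt by simp
        qed
      qed
    have Lconv: "(\<lambda>i. opnorm nV (\<lambda>w. \<rho> (s i) w - L w)) \<longlonglongrightarrow> 0"
      unfolding LIMSEQ_iff
    proof (intro allI impI)
      fix e :: real assume e: "0 < e"
      obtain M where M: "\<forall>m\<ge>M. \<forall>n\<ge>M. N (\<lambda>x. s m x - s n x) < e / 2" using C[of "e / 2"] e by auto
      have "norm (opnorm nV (\<lambda>w. \<rho> (s n) w - L w) - 0) < e" if "M \<le> n" for n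
      proof -
        have kp: "nV (\<rho> (s n) w - L w) \<le> e / 2 * nV w" for w using keyp[OF M that] e by simp
        have up: "opnorm nV (\<lambda>w. \<rho> (s n) w - L w) \<le> e / 2" using op_le[of nV "\<lambda>w. \<rho> (s n) w - L w" "e / 2", OF kp] e by simp
        have "0 \<le> opnorm nV (\<lambda>w. \<rho> (s n) w - L w)" using op_nonneg[of nV "\<lambda>w. \<rho> (s n) w - L w" "e / 2", OF kp nn] .
        then show ?thesis using up e by simp
      qed
      then show "\<exists>no. \<forall>n\<ge>no. norm (opnorm nV (\<lambda>w. \<rho> (s n) w - L w) - 0) < e" by blast
    qed
    have "\<forall>i. \<rho> (s i) \<in> \<rho> ` Cbd v" using s by blast
    then have "L \<in> \<rho> ` Cbd v" using CL[unfolded opclosed_def, rule_format, of "\<lambda>i. \<rho> (s i)" L] Lconv by blast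
    then obtain f where fC: "f \<in> Cbd v" and Lf: "L = \<rho> f" by blast
    have "\<forall>e>0. \<exists>M. \<forall>n\<ge>M. N (\<lambda>x. s n x - f x) < e"
    proof (intro allI impI)
      fix e :: real assume e: "0 < e"
      then obtain M where "\<forall>n\<ge>M. norm (opnorm nV (\<lambda>w. \<rho> (s n) w - L w) - 0) < e"
        using Lconv unfolding LIMSEQ_iff by blast
      then have M: "\<forall>n\<ge>M. norm (opnorm nV (\<lambda>w. \<rho> (s n) w - L w) - 0) < e" .
      have "N (\<lambda>x. s n x - f x) < e" if "M \<le> n" for n
      proof -
        have "norm (opnorm nV (\<lambda>w. \<rho> (s n) w - L w) - 0) < e" using M that by blast
        then have "opnorm nV (\<lambda>w. \<rho> (s n) w - L w) < e" by simp
        then show ?thesis unfolding N_def using rdiff[OF s fC, of n] Lf by simp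
      qed
      then show "\<exists>M. \<forall>n\<ge>M. N (\<lambda>x. s n x - f x) < e" by blast
    qed
    then show "\<exists>l\<in>Cbd v. \<forall>e>0. \<exists>M. \<forall>n\<ge>M. N (\<lambda>x. s n x - l x) < e" using fC by blast
  qed
  show ?thesis using open_map unfolding N_def by blast
qed


theorem mainTheorem14:
  fixes v :: "'k::field \<Rightarrow> real"
  assumes "local_field v"
  shows "(\<forall>(sm :: 'k \<Rightarrow> 'a::ring_1 \<Rightarrow> 'a) nA (\<phi> :: ('x::topological_space \<Rightarrow> 'k) \<Rightarrow> 'a).
            banach_k_algebra v sm nA \<and> unital_k_alg_hom v sm \<phi> \<and>
            inj_on \<phi> (Cbd v) \<and> nclosed nA (\<phi> ` Cbd v)
            \<longrightarrow> sup_continuous_on_Cbd v nA \<phi>)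
       \<and> (\<forall>(smV :: 'k \<Rightarrow> 'v::ab_group_add \<Rightarrow> 'v) nV (\<rho> :: ('x \<Rightarrow> 'k) \<Rightarrow> ('v \<Rightarrow> 'v)).
            k_banach_space v smV nV \<and> unital_k_alg_hom_ops v smV nV \<rho> \<and>
            inj_on \<rho> (Cbd v) \<and> opclosed nV (\<rho> ` Cbd v)
            \<longrightarrow> (\<exists>C. \<forall>f\<in>Cbd v. opnorm nV (\<rho> f) \<le> C * supnorm v f))"
proof (intro conjI allI impI)
  fix sm :: "'k \<Rightarrow> 'a::ring_1 \<Rightarrow> 'a" and nA and \<phi> :: "('x::topological_space \<Rightarrow> 'k) \<Rightarrow> 'a"
  assume H: "banach_k_algebra v sm nA \<and> unital_k_alg_hom v sm \<phi> \<and>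
            inj_on \<phi> (Cbd v) \<and> nclosed nA (\<phi> ` Cbd v)"
  show "sup_continuous_on_Cbd v nA \<phi>" using part1[OF assms] H by blast
next
  fix smV :: "'k \<Rightarrow> 'v::ab_group_add \<Rightarrow> 'v" and nV and \<rho> :: "('x \<Rightarrow> 'k) \<Rightarrow> ('v \<Rightarrow> 'v)"
  assume H: "k_banach_space v smV nV \<and> unital_k_alg_hom_ops v smV nV \<rho> \<and>
            inj_on \<rho> (Cbd v) \<and> opclosed nV (\<rho> ` Cbd v)"
  show "\<exists>C. \<forall>f\<in>Cbd v. opnorm nV (\<rho> f) \<le> C * supnorm v f" using part2[OF assms] H by blast
qed

end
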